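(* Let $G_H$ be a finite undirected multigraph (parallel edges allowed, no self-loops) with vertex set $V$ and edge set partitioned as $E = S \sqcup S^c$ into secure edges $S$ and insecure edges $S^c$, and let $0 < p_J^{S^c} \le p_I$ be real costs. Let $C^*$ be a cut of minimum cardinality among the cuts of $G_H$ containing no secure edges. Then the attack $(C^*, J, I)$ with $I = \{e\}$ for some edge $e \in C^*$ and $J = C^* \setminus\{e\}$ is an optimal hidden jamming attack, for all such costs $p_I$ and $p_J^{S^c}$.
   Context: For a nonempty proper subset $U \subsetneq V$, the cut $\delta(U)$ is the set of edges with exactly one endpoint in $U$; a cut is any set of this form. A jamming attack is a triple $(C,J,I)$ where $C$ is a cut, $J \subseteq C \cap S^c$ is a set of jammed insecure edges, and $I \subseteq (C \cap S^c)\setminus J$ is a nonempty set of insecure edges into which data is injected; its cost is $p_J^{S^c}|J| + p_I|I|$. It is hidden if $I \cup J = C$. An optimal hidden jamming attack is one of minimum cost among all hidden jamming attacks. *)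

theory Defs
  imports Complex_Main
begin

text \<open>A finite undirected multigraph: vertex set V, edge set E (edges are abstract
objects, so parallel edges are allowed), and ends e = the two endpoints of e
(the order in the pair is irrelevant for everything below).\<close>

definition multigraph :: "'v set \<Rightarrow> 'e set \<Rightarrow> ('e \<Rightarrow> 'v \<times> 'v) \<Rightarrow> bool" where
  "multigraph V E ends \<longleftrightarrow> finite V \<and> finite E \<and>
     (\<forall>e\<in>E. fst (ends e) \<in> V \<and> snd (ends e) \<in> V \<and> fst (ends e) \<noteq> snd (ends e))"

definition delta :: "'e set \<Rightarrow> ('e \<Rightarrow> 'v \<times> 'v) \<Rightarrow> 'v set \<Rightarrow> 'e set" where
  "delta E ends U = {e \<in> E. (fst (ends e) \<in> U) \<noteq> (snd (ends e) \<in> U)}"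

definition is_cut :: "'v set \<Rightarrow> 'e set \<Rightarrow> ('e \<Rightarrow> 'v \<times> 'v) \<Rightarrow> 'e set \<Rightarrow> bool" where
  "is_cut V E ends C \<longleftrightarrow> (\<exists>U. U \<noteq> {} \<and> U \<subset> V \<and> C = delta E ends U)"

definition jamming_attack ::
  "'v set \<Rightarrow> 'e set \<Rightarrow> ('e \<Rightarrow> 'v \<times> 'v) \<Rightarrow> 'e set \<Rightarrow> 'e set \<times> 'e set \<times> 'e set \<Rightarrow> bool" where
  "jamming_attack V E ends S A \<longleftrightarrow> (case A of (C, J, I) \<Rightarrow>
     is_cut V E ends C \<and> J \<subseteq> C \<inter> (E - S) \<and> I \<subseteq> (C \<inter> (E - S)) - J \<and> I \<noteq> {})"

definition attack_cost :: "real \<Rightarrow> real \<Rightarrow> 'e set \<times> 'e set \<times> 'e set \<Rightarrow> real" where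
  "attack_cost pJ pI A = (case A of (C, J, I) \<Rightarrow> pJ * real (card J) + pI * real (card I))"

definition hidden :: "'e set \<times> 'e set \<times> 'e set \<Rightarrow> bool" where
  "hidden A \<longleftrightarrow> (case A of (C, J, I) \<Rightarrow> I \<union> J = C)"

definition optimal_hidden_jamming_attack ::
  "'v set \<Rightarrow> 'e set \<Rightarrow> ('e \<Rightarrow> 'v \<times> 'v) \<Rightarrow> 'e set \<Rightarrow> real \<Rightarrow> real
   \<Rightarrow> 'e set \<times> 'e set \<times> 'e set \<Rightarrow> bool" where
  "optimal_hidden_jamming_attack V E ends S pJ pI A \<longleftrightarrow>
     jamming_attack V E ends S A \<and> hidden A \<and>
     (\<forall>A'. jamming_attack V E ends S A' \<and> hidden A' \<longrightarrow> attack_cost pJ pI A \<le> attack_cost pJ pI A')"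

end

theory Submission
  imports Defs
begin

theorem theorem2:
  fixes V :: "'v set" and E :: "'e set" and ends :: "'e \<Rightarrow> 'v \<times> 'v"
    and S Cstar :: "'e set" and pJ pI :: real and e :: 'e
  assumes "multigraph V E ends"
    and "S \<subseteq> E"
    and "0 < pJ" and "pJ \<le> pI"
    and "is_cut V E ends Cstar" and "Cstar \<inter> S = {}"
    and "\<forall>C. is_cut V E ends C \<and> C \<inter> S = {} \<longrightarrow> card Cstar \<le> card C"
    and "e \<in> Cstar"
  shows "optimal_hidden_jamming_attack V E ends S pJ pI (Cstar, Cstar - {e}, {e})"
proof -
  have fE: "finite E" using assms(1) by (simp add: multigraph_def)
  have cutsub: "\<And>C. is_cut V E ends C \<Longrightarrow> C \<subseteq> E"
    by (auto simp: is_cut_def delta_def)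
  have CsE: "Cstar \<subseteq> E" using cutsub assms(5) .
  have fC: "finite Cstar" using CsE fE finite_subset by blast
  have cst: "attack_cost pJ pI (Cstar, Cstar - {e}, {e}) = pJ * (real (card Cstar) - 1) + pI"
  proof -
    have "card Cstar \<ge> 1" using fC assms(8) by (metis One_nat_def Suc_leI card_gt_0_iff empty_iff)
    then show ?thesis using fC assms(8) by (simp add: attack_cost_def card_Diff_singleton of_nat_diff)
  qed
  have A: "jamming_attack V E ends S (Cstar, Cstar - {e}, {e})"
    using assms(5,6,8) CsE by (auto simp: jamming_attack_def)
  have H: "hidden (Cstar, Cstar - {e}, {e})" using assms(8) by (auto simp: hidden_def)
  have opt: "attack_cost pJ pI (Cstar, Cstar - {e}, {e}) \<le> attack_cost pJ pI (C, J, I)"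
    if j: "jamming_attack V E ends S (C, J, I)" and h: "hidden (C, J, I)" for C J I
  proof -
    have cut: "is_cut V E ends C" and JS: "J \<subseteq> C \<inter> (E - S)" and IS: "I \<subseteq> C \<inter> (E - S) - J"
      and In: "I \<noteq> {}" using j by (auto simp: jamming_attack_def)
    have U: "I \<union> J = C" using h by (simp add: hidden_def)
    have CE: "C \<subseteq> E" using cutsub cut .
    have fCC: "finite C" using CE fE finite_subset by blast
    have CS: "C \<inter> S = {}" using U JS IS by blast
    have le: "card Cstar \<le> card C" using assms(7) cut CS by blast
    have fI: "finite I" and fJ: "finite J" using U fCC by (auto intro: finite_subset)
    have disj: "I \<inter> J = {}" using IS by blast
    have cc: "card C = card I + card J" using U disj fI fJ card_Un_disjoint by metis
    have I1: "card I \<ge> 1" using In fI by (simp add: Suc_leI card_gt_0_iff)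
    have cost: "attack_cost pJ pI (C, J, I) = pJ * real (card J) + pI * real (card I)"
      by (simp add: attack_cost_def)
    have "pJ * (real (card Cstar) - 1) + pI \<le> pJ * (real (card C) - 1) + pI"
      using le assms(3) by (simp add: mult_left_mono)
    also have "\<dots> = pJ * real (card J) + pJ * (real (card I) - 1) + pI"
      using cc by (simp add: algebra_simps)
    also have "\<dots> \<le> pJ * real (card J) + pI * (real (card I) - 1) + pI"
      using I1 assms(4) by (simp add: mult_right_mono)
    also have "\<dots> = pJ * real (card J) + pI * real (card I)" by (simp add: algebra_simps)
    finally show ?thesis using cst cost by simp
  qed
  show ?thesis unfolding optimal_hidden_jamming_attack_def using A H opt by auto
qed

end
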